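(* Let $\Omega$ be a convex domain in $\mathbb{R}^n$, let $\tau$ be a smooth symmetric $(0,2)$-tensor field on $\Omega$, and let $x_0\neq y_0$ be points of $\Omega$. Let $e_1,\dots,e_n$ be an orthonormal frame of $\mathbb{R}^n$ with $e_n=N(x_0,y_0)$, and let $\tilde E_i=(e_i,-e_i)\in\mathbb{R}^n\times\mathbb{R}^n$ for $i=1,\dots,n$. Then $$\nabla_{\tilde E_i}E_\tau(x_0,y_0)=E_{\nabla_{e_i}\tau}(x_0,y_0)-\frac{2}{r(x_0,y_0)}\int_0^{r(x_0,y_0)}(s\,\tau_{nn;i}+2\tau_{in})(\theta(s,x_0,y_0))\,ds\quad\text{for } i<n,$$ and $$\nabla_{\tilde E_n}E_\tau(x_0,y_0)=E_{\nabla_{e_n}\tau}(x_0,y_0)-2\tau_{nn}(y_0).$$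
   Context: For $x,y\in\mathbb{R}^n$ let $r(x,y)=\|x-y\|$, and for $x\neq y$ let $N(x,y)=\frac{y-x}{\|y-x\|}$ and $\theta(s,x,y)=x+sN(x,y)$. For a symmetric $(0,2)$-tensor field $\tau$ on $\Omega$, $E_\tau(x,y)=\int_0^{r(x,y)}\tau(\theta(s,x,y))(N(x,y),N(x,y))\,ds$, viewed as a function of $(x,y)\in\Omega\times\Omega$; $\nabla_{V}$ for $V\in\mathbb{R}^n\times\mathbb{R}^n$ denotes the directional derivative of a function of $(x,y)$ in direction $V$. Components are taken in the frame $e_1,\dots,e_n$: $\tau_{ij}=\tau(e_i,e_j)$ and $\tau_{ij;k}=(\nabla_{e_k}\tau)(e_i,e_j)$; $\nabla_{e_i}\tau$ is the covariant derivative of $\tau$ in direction $e_i$. *)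

theory Defs
  imports "HOL-Analysis.Analysis"
begin

coinductive smooth_on :: "'a::euclidean_space set \<Rightarrow> ('a \<Rightarrow> real) \<Rightarrow> bool" where
  "(\<forall>x\<in>S. f differentiable (at x)) \<Longrightarrow>
   (\<forall>v. smooth_on S (\<lambda>x. frechet_derivative f (at x) v)) \<Longrightarrow> smooth_on S f"

text \<open>A (0,2)-tensor field on R^n: at each point p, tau p is a bilinear form.\<close>
type_synonym 'n tensor02 = "real^'n \<Rightarrow> real^'n \<Rightarrow> real^'n \<Rightarrow> real"

definition rdist :: "real^'n \<Rightarrow> real^'n \<Rightarrow> real" where
  "rdist x y = norm (x - y)"

definition Ndir :: "real^'n \<Rightarrow> real^'n \<Rightarrow> real^'n" where
  "Ndir x y = (1 / norm (y - x)) *\<^sub>R (y - x)"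

definition theta :: "real \<Rightarrow> real^'n \<Rightarrow> real^'n \<Rightarrow> real^'n" where
  "theta s x y = x + s *\<^sub>R Ndir x y"

definition Etau :: "'n tensor02 \<Rightarrow> real^'n \<Rightarrow> real^'n \<Rightarrow> real" where
  "Etau \<tau> x y = integral {0..rdist x y} (\<lambda>s. \<tau> (theta s x y) (Ndir x y) (Ndir x y))"

text \<open>Covariant derivative (flat Levi-Civita connection of R^n) of a (0,2)-tensor field
  in direction u: componentwise directional derivative.\<close>
definition cov_deriv :: "real^'n \<Rightarrow> 'n tensor02 \<Rightarrow> 'n tensor02" where
  "cov_deriv u \<tau> = (\<lambda>p v w. frechet_derivative (\<lambda>q. \<tau> q v w) (at p) u)"

end

theory Submission
  imports Defs
begin

lemma smooth_on_diff: "smooth_on S f \<Longrightarrow> x \<in> S \<Longrightarrow> f differentiable (at x)"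
  by (erule smooth_on.cases) auto

lemma smooth_on_deriv: "smooth_on S f \<Longrightarrow> smooth_on S (\<lambda>x. frechet_derivative f (at x) v)"
  by (erule smooth_on.cases) auto

lemma smooth_on_cont: "smooth_on S f \<Longrightarrow> continuous_on S f"
  by (meson differentiable_at_withinI differentiable_imp_continuous_on differentiable_on_def smooth_on_diff)

lemma bil_expand:
  fixes B :: "real^'n \<Rightarrow> real^'n \<Rightarrow> real"
  assumes "bilinear B"
  shows "B a b = (\<Sum>k\<in>UNIV. \<Sum>l\<in>UNIV. a$k * b$l * B (axis k 1) (axis l 1))"
proof -
  have "B a b = B (\<Sum>k\<in>UNIV. a$k *\<^sub>R axis k 1) (\<Sum>l\<in>UNIV. b$l *\<^sub>R axis l 1)"
    using basis_expansion[of a] basis_expansion[of b] by (simp add: scalar_mult_eq_scaleR)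
  also have "\<dots> = (\<Sum>(k,l)\<in>UNIV \<times> UNIV. B (a$k *\<^sub>R axis k 1) (b$l *\<^sub>R axis l 1))"
    by (rule bilinear_sum[OF assms])
  also have "\<dots> = (\<Sum>k\<in>UNIV. \<Sum>l\<in>UNIV. B (a$k *\<^sub>R axis k 1) (b$l *\<^sub>R axis l 1))"
    by (simp add: sum.cartesian_product)
  also have "\<dots> = (\<Sum>k\<in>UNIV. \<Sum>l\<in>UNIV. a$k * b$l * B (axis k 1) (axis l 1))"
    by (simp add: bilinear_lmul[OF assms] bilinear_rmul[OF assms] mult_ac)
  finally show ?thesis .
qed

lemma integral_rescale01:
  fixes f :: "real \<Rightarrow> real"
  assumes "R > 0"
  shows "integral {0..R} f = R * integral {0..1} (\<lambda>u. f (R * u))"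
proof -
  have im: "(\<lambda>x. x / R) ` {0..R} = {0..1}"
    using assms by (auto simp: image_iff field_simps intro!: bexI[where x="R * _"])
  show ?thesis
    using integral_stretch_real[of R 0 R f] assms unfolding im by simp
qed

definition tc :: "'n tensor02 \<Rightarrow> 'n \<Rightarrow> 'n \<Rightarrow> real^'n \<Rightarrow> real" where
  "tc \<tau> k l p = \<tau> p (axis k 1) (axis l 1)"

definition Tx :: "'n tensor02 \<Rightarrow> real^'n \<Rightarrow> real^'n \<Rightarrow> real^'n \<Rightarrow> real" where
  "Tx \<tau> p a b = (\<Sum>k\<in>UNIV. \<Sum>l\<in>UNIV. a$k * b$l * tc \<tau> k l p)"

definition Dc :: "'n tensor02 \<Rightarrow> 'n \<Rightarrow> 'n \<Rightarrow> real^'n \<Rightarrow> real^'n \<Rightarrow> real" where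
  "Dc \<tau> k l p w = frechet_derivative (tc \<tau> k l) (at p) w"

definition DX :: "'n tensor02 \<Rightarrow> real^'n \<Rightarrow> real^'n \<Rightarrow> real^'n \<Rightarrow> real^'n \<Rightarrow> real" where
  "DX \<tau> p w a b = (\<Sum>k\<in>UNIV. \<Sum>l\<in>UNIV. a$k * b$l * Dc \<tau> k l p w)"

lemma Tx_scale1: "Tx \<tau> p (c *\<^sub>R a) b = c * Tx \<tau> p a b"
  by (simp add: Tx_def sum_distrib_left mult_ac)
lemma Tx_scale2: "Tx \<tau> p a (c *\<^sub>R b) = c * Tx \<tau> p a b"
  by (simp add: Tx_def sum_distrib_left mult_ac)
lemma DX_scale1: "DX \<tau> p w (c *\<^sub>R a) b = c * DX \<tau> p w a b"
  by (simp add: DX_def sum_distrib_left mult_ac)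
lemma DX_scale2: "DX \<tau> p w a (c *\<^sub>R b) = c * DX \<tau> p w a b"
  by (simp add: DX_def sum_distrib_left mult_ac)

locale tset =
  fixes \<Omega> :: "(real^'n) set" and \<tau> :: "'n tensor02"
  assumes op: "open \<Omega>" and cv: "convex \<Omega>"
    and bil: "\<forall>p\<in>\<Omega>. bilinear (\<tau> p)"
    and sym: "\<forall>p\<in>\<Omega>. \<forall>v w. \<tau> p v w = \<tau> p w v"
    and smooth: "\<forall>v w. smooth_on \<Omega> (\<lambda>p. \<tau> p v w)"
begin

lemma tau_Tx: "p \<in> \<Omega> \<Longrightarrow> \<tau> p a b = Tx \<tau> p a b"
  unfolding Tx_def tc_def using bil bil_expand by blast

lemma Tx_sym: "p \<in> \<Omega> \<Longrightarrow> Tx \<tau> p a b = Tx \<tau> p b a"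
  using sym tau_Tx by metis

lemma tc_smooth: "smooth_on \<Omega> (tc \<tau> k l)"
proof -
  have "tc \<tau> k l = (\<lambda>p. \<tau> p (axis k 1) (axis l 1))" by (rule ext) (simp add: tc_def)
  thus ?thesis using smooth by simp
qed

lemma tc_cont: "continuous_on \<Omega> (tc \<tau> k l)"
  by (rule smooth_on_cont[OF tc_smooth])

lemma Dc_cont: "continuous_on \<Omega> (\<lambda>p. Dc \<tau> k l p w)"
  unfolding Dc_def by (rule smooth_on_cont[OF smooth_on_deriv[OF tc_smooth]])

lemma tc_deriv: "p \<in> \<Omega> \<Longrightarrow> (tc \<tau> k l has_derivative Dc \<tau> k l p) (at p)"
proof -
  assume "p \<in> \<Omega>"
  hence "tc \<tau> k l differentiable (at p)" using smooth_on_diff[OF tc_smooth] by blast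
  hence "(tc \<tau> k l has_derivative frechet_derivative (tc \<tau> k l) (at p)) (at p)"
    by (rule frechet_derivative_works[THEN iffD1])
  moreover have "Dc \<tau> k l p = frechet_derivative (tc \<tau> k l) (at p)"
    by (rule ext) (simp add: Dc_def)
  ultimately show ?thesis by simp
qed

lemma Dc_scale: "p \<in> \<Omega> \<Longrightarrow> Dc \<tau> k l p (c *\<^sub>R w) = c * Dc \<tau> k l p w"
  using linear.scaleR[OF has_derivative_linear[OF tc_deriv]] by simp

lemma cov_eq: "p \<in> \<Omega> \<Longrightarrow> cov_deriv w \<tau> p a b = DX \<tau> p w a b"
proof -
  assume p: "p \<in> \<Omega>"
  have "((\<lambda>q. \<Sum>k\<in>UNIV. \<Sum>l\<in>UNIV. a$k * b$l * tc \<tau> k l q) has_derivative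
        (\<lambda>h. \<Sum>k\<in>UNIV. \<Sum>l\<in>UNIV. a$k * b$l * Dc \<tau> k l p h)) (at p)"
    by (intro has_derivative_sum has_derivative_mult_right tc_deriv p)
  hence "((\<lambda>q. \<tau> q a b) has_derivative
        (\<lambda>h. \<Sum>k\<in>UNIV. \<Sum>l\<in>UNIV. a$k * b$l * Dc \<tau> k l p h)) (at p)"
    by (rule has_derivative_transform_within_open[OF _ op p]) (simp add: tau_Tx Tx_def)
  hence "(\<lambda>h. \<Sum>k\<in>UNIV. \<Sum>l\<in>UNIV. a$k * b$l * Dc \<tau> k l p h) = frechet_derivative (\<lambda>q. \<tau> q a b) (at p)"
    by (rule frechet_derivative_at)
  from fun_cong[OF this, of w] show ?thesis unfolding cov_deriv_def DX_def by simp
qed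

lemma tc_comp_deriv:
  assumes "P t \<in> \<Omega>" "(P has_vector_derivative P') (at t within S)"
  shows "((\<lambda>s. tc \<tau> k l (P s)) has_real_derivative Dc \<tau> k l (P t) P') (at t within S)"
proof -
  have "(tc \<tau> k l has_derivative Dc \<tau> k l (P t)) (at (P t) within P ` S)"
    using tc_deriv[OF assms(1)] by (rule has_derivative_at_withinI)
  from vector_derivative_diff_chain_within[OF assms(2) this]
  show ?thesis unfolding has_real_derivative_iff_has_vector_derivative o_def .
qed

end


context tset begin

lemma main:
  fixes x0 y0 v :: "real^'n"
  assumes x0: "x0 \<in> \<Omega>" and y0: "y0 \<in> \<Omega>" and neq: "x0 \<noteq> y0" and nv: "norm v = 1"
  defines "d0 \<equiv> y0 - x0"
  shows "((\<lambda>t. Etau \<tau> (x0 + t *\<^sub>R v) (y0 - t *\<^sub>R v)) has_real_derivative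
     (integral {0..1} (\<lambda>u. -4 * Tx \<tau> (x0 + u *\<^sub>R d0) v d0 + (1 - 2*u) * DX \<tau> (x0 + u *\<^sub>R d0) v d0 d0) / norm d0
      + 2 * (d0 \<bullet> v) / norm d0 ^ 3 * integral {0..1} (\<lambda>u. Tx \<tau> (x0 + u *\<^sub>R d0) d0 d0))) (at 0)"
proof -
  define r where "r = norm d0"
  have r: "r > 0" using neq by (simp add: r_def d0_def)
  define c where "c = d0 \<bullet> v"
  obtain e1 where e1: "e1 > 0" "ball x0 e1 \<subseteq> \<Omega>" using op x0 open_contains_ball by blast
  obtain e2 where e2: "e2 > 0" "ball y0 e2 \<subseteq> \<Omega>" using op y0 open_contains_ball by blast
  define \<delta> where "\<delta> = min (min e1 e2) (r/4)"
  have \<delta>: "\<delta> > 0" "\<delta> \<le> e1" "\<delta> \<le> e2" "\<delta> \<le> r/4" using e1 e2 r by (auto simp: \<delta>_def)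
  define P where "P t u = x0 + t *\<^sub>R v + u *\<^sub>R (d0 - (2*t) *\<^sub>R v)" for t u :: real
  define D where "D t = d0 - (2*t) *\<^sub>R v" for t :: real
  have P_in: "P t u \<in> \<Omega>" if t: "\<bar>t\<bar> < \<delta>" and u: "u \<in> {0..1}" for t u
  proof -
    have a: "x0 + t *\<^sub>R v \<in> \<Omega>" using e1 t \<delta> nv by (auto simp: dist_norm)
    have b: "y0 - t *\<^sub>R v \<in> \<Omega>" using e2 t \<delta> nv by (auto simp: dist_norm)
    have "P t u = (1 - u) *\<^sub>R (x0 + t *\<^sub>R v) + u *\<^sub>R (y0 - t *\<^sub>R v)"
      by (simp add: vec_eq_iff P_def d0_def algebra_simps)
    thus ?thesis using cv[unfolded convex_alt] a b u by auto
  qed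
  have Dn: "norm (D t) = sqrt (r\<^sup>2 - 4*t*c + 4*t\<^sup>2)" for t
  proof -
    have vv: "v \<bullet> v = 1" using nv by (simp add: power2_norm_eq_inner[symmetric])
    have dd: "d0 \<bullet> d0 = r\<^sup>2" by (simp add: r_def power2_norm_eq_inner)
    show ?thesis unfolding norm_eq_sqrt_inner D_def
      by (simp add: inner_diff_left inner_diff_right inner_commute vv dd c_def algebra_simps power2_eq_square)
  qed
  have Dpos: "norm (D t) > 0" if t: "\<bar>t\<bar> < \<delta>" for t
  proof -
    have "d0 = D t + (2*t) *\<^sub>R v" by (simp add: D_def)
    hence "r \<le> norm (D t) + norm ((2*t) *\<^sub>R v)" unfolding r_def by (metis norm_triangle_ineq)
    thus ?thesis using t \<delta> nv by auto
  qed
  define g where "g t u = Tx \<tau> (P t u) (D t) (D t)" for t u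
  define F where "F t = integral {0..1} (g t)" for t
  have claim1: "Etau \<tau> (x0 + t *\<^sub>R v) (y0 - t *\<^sub>R v) = F t / norm (D t)" if t: "\<bar>t\<bar> < \<delta>" for t
  proof -
    define R where "R = norm (D t)"
    have R: "R > 0" using Dpos[OF t] by (simp add: R_def)
    have yx: "(y0 - t *\<^sub>R v) - (x0 + t *\<^sub>R v) = D t" by (simp add: vec_eq_iff D_def d0_def algebra_simps)
    have rd: "rdist (x0 + t *\<^sub>R v) (y0 - t *\<^sub>R v) = R"
      unfolding rdist_def R_def by (subst norm_minus_commute) (simp add: yx)
    have Nd: "Ndir (x0 + t *\<^sub>R v) (y0 - t *\<^sub>R v) = (1/R) *\<^sub>R D t"
      unfolding Ndir_def yx R_def ..
    have "Etau \<tau> (x0 + t *\<^sub>R v) (y0 - t *\<^sub>R v) = integral {0..R}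
       (\<lambda>s. \<tau> (x0 + t *\<^sub>R v + s *\<^sub>R ((1/R) *\<^sub>R D t)) ((1/R) *\<^sub>R D t) ((1/R) *\<^sub>R D t))"
      unfolding Etau_def rd Nd theta_def ..
    also have "\<dots> = R * integral {0..1}
       (\<lambda>u. \<tau> (x0 + t *\<^sub>R v + (R*u) *\<^sub>R ((1/R) *\<^sub>R D t)) ((1/R) *\<^sub>R D t) ((1/R) *\<^sub>R D t))"
      by (rule integral_rescale01[OF R])
    also have "integral {0..1}
       (\<lambda>u. \<tau> (x0 + t *\<^sub>R v + (R*u) *\<^sub>R ((1/R) *\<^sub>R D t)) ((1/R) *\<^sub>R D t) ((1/R) *\<^sub>R D t))
       = integral {0..1} (\<lambda>u. (1/R) * (1/R) * g t u)"
    proof (rule integral_cong)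
      fix u :: real assume u: "u \<in> {0..1}"
      have "(R*u) *\<^sub>R ((1/R) *\<^sub>R D t) = u *\<^sub>R D t" using R by (simp add: scaleR_scaleR)
      hence "x0 + t *\<^sub>R v + (R*u) *\<^sub>R ((1/R) *\<^sub>R D t) = P t u" by (simp add: P_def D_def)
      thus "\<tau> (x0 + t *\<^sub>R v + (R*u) *\<^sub>R ((1/R) *\<^sub>R D t)) ((1/R) *\<^sub>R D t) ((1/R) *\<^sub>R D t)
         = (1/R) * (1/R) * g t u"
        using P_in[OF t u] by (simp add: tau_Tx Tx_scale1 Tx_scale2 g_def)
    qed
    also have "R * integral {0..1} (\<lambda>u. (1/R) * (1/R) * g t u) = F t / R"
      using R by (simp add: F_def)
    finally show ?thesis by (simp add: R_def)
  qed

  define U where "U = {-\<delta>/2..\<delta>/2}"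
  have U_lt: "\<bar>t\<bar> < \<delta>" if "t \<in> U" for t using that \<delta> by (auto simp: U_def)
  define G where "G t u = (\<Sum>k\<in>UNIV. \<Sum>l\<in>UNIV.
      (-2 * v$k) * (d0$l - 2*t* v$l) * tc \<tau> k l (P t u)
    + (d0$k - 2*t* v$k) * (-2 * v$l) * tc \<tau> k l (P t u)
    + (d0$k - 2*t* v$k) * (d0$l - 2*t* v$l) * ((1 - 2*u) * Dc \<tau> k l (P t u) v))" for t u
  have gx: "g t u = (\<Sum>k\<in>UNIV. \<Sum>l\<in>UNIV. (d0$k - 2*t* v$k) * (d0$l - 2*t* v$l) * tc \<tau> k l (P t u))"
    for t u by (simp add: g_def Tx_def D_def)
  have Pd: "((\<lambda>t. P t u) has_vector_derivative ((1 - 2*u) *\<^sub>R v)) (at t within S)" for t u S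
  proof -
    have "(\<lambda>t. P t u) = (\<lambda>t. (x0 + u *\<^sub>R d0) + t *\<^sub>R ((1 - 2*u) *\<^sub>R v))"
      by (rule ext) (simp add: vec_eq_iff P_def algebra_simps)
    thus ?thesis unfolding has_vector_derivative_def
      by (auto intro!: derivative_eq_intros)
  qed
  have gd: "((\<lambda>t. g t u) has_real_derivative G t u) (at t within U)" if t: "t \<in> U" and u: "u \<in> {0..1}" for t u
  proof -
    have Pin: "P t u \<in> \<Omega>" using P_in[OF U_lt[OF t] u] .
    have tcd: "((\<lambda>s. tc \<tau> k l (P s u)) has_real_derivative (1 - 2*u) * Dc \<tau> k l (P t u) v) (at t within U)" for k l
      using tc_comp_deriv[of "\<lambda>s. P s u" t, OF Pin Pd] Dc_scale[OF Pin] by simp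
    show ?thesis unfolding gx G_def
      by (intro DERIV_sum) (auto intro!: derivative_eq_intros tcd simp: algebra_simps)
  qed
  have Pc: "continuous_on A (\<lambda>z. P (fst z) (snd z))" for A
    unfolding P_def by (intro continuous_intros)
  have Pim: "(\<lambda>z. P (fst z) (snd z)) ` (U \<times> {0..1}) \<subseteq> \<Omega>" using P_in U_lt by auto
  have cP1: "continuous_on (U \<times> {0..1}) (\<lambda>z. tc \<tau> k l (P (fst z) (snd z)))" for k l
    by (rule continuous_on_compose2[OF tc_cont Pc Pim])
  have cP2: "continuous_on (U \<times> {0..1}) (\<lambda>z. Dc \<tau> k l (P (fst z) (snd z)) v)" for k l
    by (rule continuous_on_compose2[OF Dc_cont Pc Pim])
  have Gc: "continuous_on (U \<times> cbox 0 1) (\<lambda>(t, u). G t u)"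
    unfolding split_beta G_def box_real by (intro continuous_intros cP1 cP2)
  have gi: "g t integrable_on cbox 0 1" if t: "t \<in> U" for t
  proof -
    have "continuous_on {0..1} (\<lambda>u. tc \<tau> k l (P t u))" for k l
      by (rule continuous_on_compose2[OF tc_cont]) (auto simp: P_def[abs_def] intro!: continuous_intros P_in[simplified P_def] U_lt t)
    hence "continuous_on {0..1} (g t)" unfolding gx by (intro continuous_intros)
    thus ?thesis unfolding box_real by (rule integrable_continuous_interval)
  qed
  have claim2: "(F has_real_derivative integral {0..1} (G 0)) (at 0)"
  proof -
    have "((\<lambda>t. integral (cbox 0 1) (g t)) has_real_derivative integral (cbox 0 1) (G 0)) (at 0 within U)"
      by (rule leibniz_rule_field_derivative[OF gd[unfolded box_real[symmetric]] gi Gc])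
         (use \<delta> in \<open>auto simp: U_def box_real\<close>)
    moreover have "at (0::real) within U = at 0"
      by (rule at_within_interior) (use \<delta> in \<open>simp add: U_def\<close>)
    moreover have "F = (\<lambda>t. integral (cbox 0 1) (g t))" by (simp add: F_def box_real fun_eq_iff)
    ultimately show ?thesis by (simp add: box_real)
  qed

  have q0: "r\<^sup>2 - 4*0*c + 4*0\<^sup>2 > (0::real)" using r by simp
  have der: "((\<lambda>t. F t / sqrt (r\<^sup>2 - 4*t*c + 4*t\<^sup>2)) has_real_derivative
        integral {0..1} (G 0) / r + 2*c/r^3 * F 0) (at 0)"
    using r by (auto intro!: derivative_eq_intros claim2 simp: field_simps power2_eq_square power3_eq_cube)

  have E_der: "((\<lambda>t. Etau \<tau> (x0 + t *\<^sub>R v) (y0 - t *\<^sub>R v)) has_real_derivative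
        integral {0..1} (G 0) / r + 2*c/r^3 * F 0) (at 0)"
  proof (rule has_field_derivative_transform_within_open[OF der, of "{-\<delta><..<\<delta>}"])
    show "open {-\<delta><..<\<delta>}" by simp
    show "0 \<in> {-\<delta><..<\<delta>}" using \<delta> by simp
    fix t assume "t \<in> {-\<delta><..<\<delta>}"
    hence t: "\<bar>t\<bar> < \<delta>" by auto
    show "F t / sqrt (r\<^sup>2 - 4*t*c + 4*t\<^sup>2) = Etau \<tau> (x0 + t *\<^sub>R v) (y0 - t *\<^sub>R v)"
      using claim1[OF t] Dn[of t] by simp
  qed
  have G0: "integral {0..1} (G 0) = integral {0..1}
      (\<lambda>u. -4 * Tx \<tau> (x0 + u *\<^sub>R d0) v d0 + (1 - 2*u) * DX \<tau> (x0 + u *\<^sub>R d0) v d0 d0)"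
  proof (rule integral_cong)
    fix u :: real assume u: "u \<in> {0..1}"
    have Pin: "x0 + u *\<^sub>R d0 \<in> \<Omega>" using P_in[of 0 u] u \<delta> by (simp add: P_def)
    have "G 0 u = -2 * Tx \<tau> (x0 + u *\<^sub>R d0) v d0 + -2 * Tx \<tau> (x0 + u *\<^sub>R d0) d0 v
        + (1 - 2*u) * DX \<tau> (x0 + u *\<^sub>R d0) v d0 d0"
      unfolding G_def Tx_def DX_def P_def
      by (simp only: sum_distrib_left sum.distrib[symmetric]) (intro sum.cong refl; simp add: algebra_simps)
    thus "G 0 u = -4 * Tx \<tau> (x0 + u *\<^sub>R d0) v d0 + (1 - 2*u) * DX \<tau> (x0 + u *\<^sub>R d0) v d0 d0"
      using Tx_sym[OF Pin, of d0 v] by simp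
  qed
  have F0: "F 0 = integral {0..1} (\<lambda>u. Tx \<tau> (x0 + u *\<^sub>R d0) d0 d0)"
    unfolding F_def g_def[abs_def] P_def D_def by simp
  show ?thesis using E_der unfolding G0 F0 r_def c_def .
qed

end


context tset begin

lemma seg_in: "x0 \<in> \<Omega> \<Longrightarrow> y0 \<in> \<Omega> \<Longrightarrow> u \<in> {0..1} \<Longrightarrow> x0 + u *\<^sub>R (y0 - x0) \<in> \<Omega>"
proof -
  assume a: "x0 \<in> \<Omega>" "y0 \<in> \<Omega>" "u \<in> {0..1}"
  have "x0 + u *\<^sub>R (y0 - x0) = (1 - u) *\<^sub>R x0 + u *\<^sub>R y0" by (simp add: vec_eq_iff algebra_simps)
  thus ?thesis using cv[unfolded convex_alt] a by auto
qed

lemma seg_cont_tc: "x0 \<in> \<Omega> \<Longrightarrow> y0 \<in> \<Omega> \<Longrightarrow> continuous_on {0..1} (\<lambda>u. tc \<tau> k l (x0 + u *\<^sub>R (y0 - x0)))"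
  by (rule continuous_on_compose2[OF tc_cont]) (auto intro!: continuous_intros seg_in)

lemma seg_cont_Dc: "x0 \<in> \<Omega> \<Longrightarrow> y0 \<in> \<Omega> \<Longrightarrow> continuous_on {0..1} (\<lambda>u. Dc \<tau> k l (x0 + u *\<^sub>R (y0 - x0)) w)"
  by (rule continuous_on_compose2[OF Dc_cont]) (auto intro!: continuous_intros seg_in)

lemma seg_int_Tx: "x0 \<in> \<Omega> \<Longrightarrow> y0 \<in> \<Omega> \<Longrightarrow> (\<lambda>u. Tx \<tau> (x0 + u *\<^sub>R (y0 - x0)) a b) integrable_on {0..1}"
  unfolding Tx_def by (intro integrable_continuous_interval continuous_intros seg_cont_tc)

lemma seg_int_DX: "x0 \<in> \<Omega> \<Longrightarrow> y0 \<in> \<Omega> \<Longrightarrow> (\<lambda>u. DX \<tau> (x0 + u *\<^sub>R (y0 - x0)) w a b) integrable_on {0..1}"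
  unfolding DX_def by (intro integrable_continuous_interval continuous_intros seg_cont_Dc)

lemma seg_int_uDX: "x0 \<in> \<Omega> \<Longrightarrow> y0 \<in> \<Omega> \<Longrightarrow> (\<lambda>u. u * DX \<tau> (x0 + u *\<^sub>R (y0 - x0)) w a b) integrable_on {0..1}"
  unfolding DX_def by (intro integrable_continuous_interval continuous_intros seg_cont_Dc)

lemma corA:
  fixes x0 y0 v :: "real^'n"
  assumes x0: "x0 \<in> \<Omega>" and y0: "y0 \<in> \<Omega>" and neq: "x0 \<noteq> y0" and nv: "norm v = 1"
    and orth: "v \<bullet> Ndir x0 y0 = 0"
  shows "((\<lambda>t. Etau \<tau> (x0 + t *\<^sub>R v) (y0 - t *\<^sub>R v)) has_real_derivative
     (Etau (cov_deriv v \<tau>) x0 y0 - 2 / rdist x0 y0 * integral {0..rdist x0 y0}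
       (\<lambda>s. s * cov_deriv v \<tau> (theta s x0 y0) (Ndir x0 y0) (Ndir x0 y0)
            + 2 * \<tau> (theta s x0 y0) v (Ndir x0 y0)))) (at 0)"
proof -
  define d0 where "d0 = y0 - x0"
  define r where "r = norm d0"
  have r: "r > 0" using neq by (simp add: r_def d0_def)
  define N where "N = (1/r) *\<^sub>R d0"
  have Nd: "Ndir x0 y0 = N" by (simp add: Ndir_def N_def r_def d0_def)
  have rd: "rdist x0 y0 = r" by (simp add: rdist_def r_def d0_def norm_minus_commute)
  have th: "theta (r * u) x0 y0 = x0 + u *\<^sub>R d0" for u
    using r by (simp add: theta_def Nd N_def scaleR_scaleR)
  have c0: "d0 \<bullet> v = 0"
  proof -
    have "d0 = r *\<^sub>R N" using r by (simp add: N_def)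
    thus ?thesis using orth Nd by (simp add: inner_commute)
  qed
  define \<phi>1 where "\<phi>1 u = DX \<tau> (x0 + u *\<^sub>R d0) v d0 d0" for u
  define \<phi>2 where "\<phi>2 u = Tx \<tau> (x0 + u *\<^sub>R d0) v d0" for u
  have pin: "u \<in> {0..1} \<Longrightarrow> x0 + u *\<^sub>R d0 \<in> \<Omega>" for u using seg_in[OF x0 y0] by (simp add: d0_def)
  have i1: "(\<phi>1 has_integral integral {0..1} \<phi>1) {0..1}"
    using seg_int_DX[OF x0 y0] unfolding \<phi>1_def[abs_def] d0_def by blast
  have i1u: "((\<lambda>u. u * \<phi>1 u) has_integral integral {0..1} (\<lambda>u. u * \<phi>1 u)) {0..1}"
    using seg_int_uDX[OF x0 y0] unfolding \<phi>1_def[abs_def] d0_def by blast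
  have i2: "(\<phi>2 has_integral integral {0..1} \<phi>2) {0..1}"
    using seg_int_Tx[OF x0 y0] unfolding \<phi>2_def[abs_def] d0_def by blast
  define ID where "ID = integral {0..1} \<phi>1"
  define IuD where "IuD = integral {0..1} (\<lambda>u. u * \<phi>1 u)"
  define IT where "IT = integral {0..1} \<phi>2"
  have mainv: "((\<lambda>t. Etau \<tau> (x0 + t *\<^sub>R v) (y0 - t *\<^sub>R v)) has_real_derivative
     (integral {0..1} (\<lambda>u. -4 * \<phi>2 u + (1 - 2*u) * \<phi>1 u) / r)) (at 0)"
    using main[OF x0 y0 neq nv] unfolding d0_def[symmetric] r_def[symmetric] \<phi>1_def \<phi>2_def c0 by simp
  have "((\<lambda>u. -4 * \<phi>2 u + \<phi>1 u - 2 * (u * \<phi>1 u)) has_integral (-4 * IT + ID - 2 * IuD)) {0..1}"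
    unfolding ID_def IuD_def IT_def
    by (intro has_integral_add has_integral_diff has_integral_mult_right i1 i1u i2)
  hence "integral {0..1} (\<lambda>u. -4 * \<phi>2 u + (1 - 2*u) * \<phi>1 u) = -4 * IT + ID - 2 * IuD"
    by (simp add: algebra_simps integral_unique)
  note mainv = mainv[unfolded this]
  have E1: "Etau (cov_deriv v \<tau>) x0 y0 = ID / r"
  proof -
    have "Etau (cov_deriv v \<tau>) x0 y0 = integral {0..r} (\<lambda>s. cov_deriv v \<tau> (theta s x0 y0) N N)"
      by (simp add: Etau_def rd Nd)
    also have "\<dots> = r * integral {0..1} (\<lambda>u. cov_deriv v \<tau> (theta (r*u) x0 y0) N N)"
      by (rule integral_rescale01[OF r])
    also have "integral {0..1} (\<lambda>u. cov_deriv v \<tau> (theta (r*u) x0 y0) N N) = integral {0..1} (\<lambda>u. (1/r) * (1/r) * \<phi>1 u)"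
      by (rule integral_cong) (simp add: th cov_eq pin N_def DX_scale1 DX_scale2 \<phi>1_def)
    finally show ?thesis using r by (simp add: ID_def)
  qed
  have E2: "integral {0..r} (\<lambda>s. s * cov_deriv v \<tau> (theta s x0 y0) N N + 2 * \<tau> (theta s x0 y0) v N) = IuD + 2 * IT"
  proof -
    have "integral {0..r} (\<lambda>s. s * cov_deriv v \<tau> (theta s x0 y0) N N + 2 * \<tau> (theta s x0 y0) v N)
       = r * integral {0..1} (\<lambda>u. (r*u) * cov_deriv v \<tau> (theta (r*u) x0 y0) N N + 2 * \<tau> (theta (r*u) x0 y0) v N)"
      by (rule integral_rescale01[OF r])
    also have "integral {0..1} (\<lambda>u. (r*u) * cov_deriv v \<tau> (theta (r*u) x0 y0) N N + 2 * \<tau> (theta (r*u) x0 y0) v N)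
      = integral {0..1} (\<lambda>u. (1/r) * (u * \<phi>1 u) + (2/r) * \<phi>2 u)"
      by (rule integral_cong) (use r in \<open>simp add: th cov_eq pin tau_Tx N_def DX_scale1 DX_scale2 Tx_scale2 \<phi>1_def \<phi>2_def\<close>)
    also have "integral {0..1} (\<lambda>u. (1/r) * (u * \<phi>1 u) + (2/r) * \<phi>2 u) = (1/r) * IuD + (2/r) * IT"
      unfolding IuD_def IT_def
      by (intro integral_unique has_integral_add has_integral_mult_right i1u i2)
    finally show ?thesis using r by (simp add: algebra_simps)
  qed
  have "(-4 * IT + ID - 2 * IuD) / r = Etau (cov_deriv v \<tau>) x0 y0 - 2 / rdist x0 y0 * integral {0..rdist x0 y0}
       (\<lambda>s. s * cov_deriv v \<tau> (theta s x0 y0) (Ndir x0 y0) (Ndir x0 y0) + 2 * \<tau> (theta s x0 y0) v (Ndir x0 y0))"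
    unfolding E1 rd Nd E2 using r by (simp add: field_simps)
  thus ?thesis using mainv by simp
qed

end


context tset begin

lemma corB:
  fixes x0 y0 :: "real^'n"
  assumes x0: "x0 \<in> \<Omega>" and y0: "y0 \<in> \<Omega>" and neq: "x0 \<noteq> y0"
  shows "((\<lambda>t. Etau \<tau> (x0 + t *\<^sub>R Ndir x0 y0) (y0 - t *\<^sub>R Ndir x0 y0)) has_real_derivative
     (Etau (cov_deriv (Ndir x0 y0) \<tau>) x0 y0 - 2 * \<tau> y0 (Ndir x0 y0) (Ndir x0 y0))) (at 0)"
proof -
  define d0 where "d0 = y0 - x0"
  define r where "r = norm d0"
  have r: "r > 0" using neq by (simp add: r_def d0_def)
  define N where "N = (1/r) *\<^sub>R d0"
  have Nd: "Ndir x0 y0 = N" by (simp add: Ndir_def N_def r_def d0_def)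
  have rd: "rdist x0 y0 = r" by (simp add: rdist_def r_def d0_def norm_minus_commute)
  have th: "theta (r * u) x0 y0 = x0 + u *\<^sub>R d0" for u
    using r by (simp add: theta_def Nd N_def scaleR_scaleR)
  have dN: "d0 = r *\<^sub>R N" using r by (simp add: N_def)
  have nN: "norm N = 1" using r by (simp add: N_def r_def)
  have c0: "d0 \<bullet> N = r"
    using nN by (simp add: dN power2_norm_eq_inner[symmetric])
  define f where "f u = Tx \<tau> (x0 + u *\<^sub>R d0) N N" for u
  define \<phi> where "\<phi> u = DX \<tau> (x0 + u *\<^sub>R d0) N N N" for u
  have pin: "u \<in> {0..1} \<Longrightarrow> x0 + u *\<^sub>R d0 \<in> \<Omega>" for u using seg_in[OF x0 y0] by (simp add: d0_def)
  have i1: "(\<phi> has_integral integral {0..1} \<phi>) {0..1}"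
    using seg_int_DX[OF x0 y0] unfolding \<phi>_def[abs_def] d0_def by blast
  have i1u: "((\<lambda>u. u * \<phi> u) has_integral integral {0..1} (\<lambda>u. u * \<phi> u)) {0..1}"
    using seg_int_uDX[OF x0 y0] unfolding \<phi>_def[abs_def] d0_def by blast
  have i2: "(f has_integral integral {0..1} f) {0..1}"
    using seg_int_Tx[OF x0 y0] unfolding f_def[abs_def] d0_def by blast
  define I\<phi> where "I\<phi> = integral {0..1} \<phi>"
  define Iu\<phi> where "Iu\<phi> = integral {0..1} (\<lambda>u. u * \<phi> u)"
  define If where "If = integral {0..1} f"
  have mainv: "((\<lambda>t. Etau \<tau> (x0 + t *\<^sub>R N) (y0 - t *\<^sub>R N)) has_real_derivative
     (integral {0..1} (\<lambda>u. -4 * Tx \<tau> (x0 + u *\<^sub>R d0) N d0 + (1 - 2*u) * DX \<tau> (x0 + u *\<^sub>R d0) N d0 d0) / r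
      + 2 * r / r ^ 3 * integral {0..1} (\<lambda>u. Tx \<tau> (x0 + u *\<^sub>R d0) d0 d0))) (at 0)"
    using main[OF x0 y0 neq nN] unfolding d0_def[symmetric] r_def[symmetric] c0 by simp
  have A: "integral {0..1} (\<lambda>u. -4 * Tx \<tau> (x0 + u *\<^sub>R d0) N d0 + (1 - 2*u) * DX \<tau> (x0 + u *\<^sub>R d0) N d0 d0)
      = -4 * r * If + r * r * I\<phi> - 2 * (r * r) * Iu\<phi>"
  proof -
    have "((\<lambda>u. (-4 * r) * f u + (r * r) * \<phi> u - (2 * (r * r)) * (u * \<phi> u)) has_integral
        (-4 * r * If + r * r * I\<phi> - 2 * (r * r) * Iu\<phi>)) {0..1}"
      unfolding If_def I\<phi>_def Iu\<phi>_def
      by (intro has_integral_add has_integral_diff has_integral_mult_right i1 i1u i2)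
    moreover have "-4 * Tx \<tau> (x0 + u *\<^sub>R d0) N d0 + (1 - 2*u) * DX \<tau> (x0 + u *\<^sub>R d0) N d0 d0
       = (-4 * r) * f u + (r * r) * \<phi> u - (2 * (r * r)) * (u * \<phi> u)" for u
      unfolding f_def \<phi>_def by (subst (1 2 3) dN) (simp add: Tx_scale2 DX_scale1 DX_scale2 algebra_simps)
    ultimately show ?thesis by (simp add: integral_unique)
  qed
  have B: "integral {0..1} (\<lambda>u. Tx \<tau> (x0 + u *\<^sub>R d0) d0 d0) = r * r * If"
  proof -
    have "Tx \<tau> (x0 + u *\<^sub>R d0) d0 d0 = (r * r) * f u" for u
      unfolding f_def by (subst (1 2) dN) (simp add: Tx_scale1 Tx_scale2)
    thus ?thesis by (simp add: If_def)
  qed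
  have E1: "Etau (cov_deriv N \<tau>) x0 y0 = r * I\<phi>"
  proof -
    have "Etau (cov_deriv N \<tau>) x0 y0 = integral {0..r} (\<lambda>s. cov_deriv N \<tau> (theta s x0 y0) N N)"
      by (simp add: Etau_def rd Nd)
    also have "\<dots> = r * integral {0..1} (\<lambda>u. cov_deriv N \<tau> (theta (r*u) x0 y0) N N)"
      by (rule integral_rescale01[OF r])
    also have "integral {0..1} (\<lambda>u. cov_deriv N \<tau> (theta (r*u) x0 y0) N N) = I\<phi>"
      unfolding I\<phi>_def by (rule integral_cong) (simp add: th cov_eq pin \<phi>_def)
    finally show ?thesis .
  qed
  have fd: "(f has_vector_derivative r * \<phi> u) (at u within {0..1})" if u: "u \<in> {0..1}" for u
  proof -
    have pd: "((\<lambda>s. x0 + s *\<^sub>R d0) has_vector_derivative d0) (at u within {0..1})"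
      unfolding has_vector_derivative_def by (auto intro!: derivative_eq_intros)
    have tcd: "((\<lambda>s. tc \<tau> k l (x0 + s *\<^sub>R d0)) has_real_derivative r * Dc \<tau> k l (x0 + u *\<^sub>R d0) N) (at u within {0..1})" for k l
    proof -
      have a: "((\<lambda>s. tc \<tau> k l (x0 + s *\<^sub>R d0)) has_real_derivative Dc \<tau> k l (x0 + u *\<^sub>R d0) d0) (at u within {0..1})"
        by (rule tc_comp_deriv[OF pin[OF u] pd])
      have b: "Dc \<tau> k l (x0 + u *\<^sub>R d0) d0 = r * Dc \<tau> k l (x0 + u *\<^sub>R d0) N"
        using Dc_scale[OF pin[OF u], of k l r N] unfolding dN[symmetric] .
      show ?thesis using a unfolding b .
    qed
    have "(f has_real_derivative (\<Sum>k\<in>UNIV. \<Sum>l\<in>UNIV. N$k * N$l * (r * Dc \<tau> k l (x0 + u *\<^sub>R d0) N))) (at u within {0..1})"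
      unfolding f_def[abs_def] Tx_def
      by (intro DERIV_sum DERIV_cmult tcd)
    moreover have "(\<Sum>k\<in>UNIV. \<Sum>l\<in>UNIV. N$k * N$l * (r * Dc \<tau> k l (x0 + u *\<^sub>R d0) N)) = r * \<phi> u"
      by (simp add: \<phi>_def DX_def sum_distrib_left mult_ac)
    ultimately show ?thesis by (simp add: has_real_derivative_iff_has_vector_derivative)
  qed
  have ftc: "((\<lambda>u. f u + u * (r * \<phi> u)) has_integral (1 * f 1 - 0 * f 0)) {0..1}"
  proof (rule fundamental_theorem_of_calculus)
    fix u :: real assume u: "u \<in> {0..1}"
    have "((\<lambda>u. u * f u) has_real_derivative (1 * f u + u * (r * \<phi> u))) (at u within {0..1})"
      using fd[OF u] unfolding has_real_derivative_iff_has_vector_derivative[symmetric]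
      by (auto intro!: derivative_eq_intros)
    thus "((\<lambda>u. u * f u) has_vector_derivative (f u + u * (r * \<phi> u))) (at u within {0..1})"
      by (simp add: has_real_derivative_iff_has_vector_derivative)
  qed simp
  have "((\<lambda>u. f u + r * (u * \<phi> u)) has_integral (If + r * Iu\<phi>)) {0..1}"
    unfolding If_def Iu\<phi>_def by (intro has_integral_add has_integral_mult_right i1u i2)
  moreover have "(\<lambda>u. f u + u * (r * \<phi> u)) = (\<lambda>u. f u + r * (u * \<phi> u))" by (simp add: fun_eq_iff mult_ac)
  moreover have "((\<lambda>u. f u + u * (r * \<phi> u)) has_integral f 1) {0..1}" using ftc by simp
  ultimately have key: "If + r * Iu\<phi> = f 1" by (metis has_integral_unique)
  have f1: "\<tau> y0 N N = f 1" unfolding f_def d0_def using y0 by (simp add: tau_Tx)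
  have "(-4 * r * If + r * r * I\<phi> - 2 * (r * r) * Iu\<phi>) / r + 2 * r / r ^ 3 * (r * r * If)
     = r * I\<phi> - 2 * (If + r * Iu\<phi>)"
    using r by (simp add: field_simps power3_eq_cube)
  hence "(-4 * r * If + r * r * I\<phi> - 2 * (r * r) * Iu\<phi>) / r + 2 * r / r ^ 3 * (r * r * If)
     = Etau (cov_deriv N \<tau>) x0 y0 - 2 * \<tau> y0 N N"
    unfolding E1 f1 key .
  thus ?thesis using mainv unfolding A B Nd by simp
qed

end


theorem theorem2p3:
  fixes \<Omega> :: "(real^'n) set" and \<tau> :: "'n tensor02"
    and x0 y0 :: "real^'n" and e :: "nat \<Rightarrow> real^'n"
  defines "n \<equiv> CARD('n)"
  assumes open_\<Omega>: "open \<Omega>" and conn: "connected \<Omega>" and conv: "convex \<Omega>"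
    and bil: "\<forall>p\<in>\<Omega>. bilinear (\<tau> p)"
    and sym: "\<forall>p\<in>\<Omega>. \<forall>v w. \<tau> p v w = \<tau> p w v"
    and smooth: "\<forall>v w. smooth_on \<Omega> (\<lambda>p. \<tau> p v w)"
    and x0: "x0 \<in> \<Omega>" and y0: "y0 \<in> \<Omega>" and neq: "x0 \<noteq> y0"
    and orthonormal: "\<forall>i\<in>{1..n}. \<forall>j\<in>{1..n}. e i \<bullet> e j = (if i = j then 1 else 0)"
    and en: "e n = Ndir x0 y0"
  shows "(\<forall>i\<in>{1..<n}.
           ((\<lambda>t. Etau \<tau> (x0 + t *\<^sub>R e i) (y0 - t *\<^sub>R e i)) has_real_derivative
              (Etau (cov_deriv (e i) \<tau>) x0 y0
               - 2 / rdist x0 y0 * integral {0..rdist x0 y0}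
                   (\<lambda>s. s * cov_deriv (e i) \<tau> (theta s x0 y0) (e n) (e n)
                        + 2 * \<tau> (theta s x0 y0) (e i) (e n)))) (at 0))
       \<and> ((\<lambda>t. Etau \<tau> (x0 + t *\<^sub>R e n) (y0 - t *\<^sub>R e n)) has_real_derivative
              (Etau (cov_deriv (e n) \<tau>) x0 y0 - 2 * \<tau> y0 (e n) (e n))) (at 0)"
proof -
  interpret tset \<Omega> \<tau>
    using open_\<Omega> conv bil sym smooth by unfold_locales auto
  have n1: "1 \<le> n" unfolding n_def by (simp add: Suc_leI)
  show ?thesis
  proof
    show "\<forall>i\<in>{1..<n}.
           ((\<lambda>t. Etau \<tau> (x0 + t *\<^sub>R e i) (y0 - t *\<^sub>R e i)) has_real_derivative
              (Etau (cov_deriv (e i) \<tau>) x0 y0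
               - 2 / rdist x0 y0 * integral {0..rdist x0 y0}
                   (\<lambda>s. s * cov_deriv (e i) \<tau> (theta s x0 y0) (e n) (e n)
                        + 2 * \<tau> (theta s x0 y0) (e i) (e n)))) (at 0)"
    proof
      fix i assume i: "i \<in> {1..<n}"
      have "e i \<bullet> e i = 1" using orthonormal i by auto
      hence nv: "norm (e i) = 1" by (simp add: norm_eq_sqrt_inner)
      have "e i \<bullet> e n = 0" using orthonormal i n1 by auto
      hence orth: "e i \<bullet> Ndir x0 y0 = 0" using en by simp
      show "((\<lambda>t. Etau \<tau> (x0 + t *\<^sub>R e i) (y0 - t *\<^sub>R e i)) has_real_derivative
              (Etau (cov_deriv (e i) \<tau>) x0 y0
               - 2 / rdist x0 y0 * integral {0..rdist x0 y0}
                   (\<lambda>s. s * cov_deriv (e i) \<tau> (theta s x0 y0) (e n) (e n)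
                        + 2 * \<tau> (theta s x0 y0) (e i) (e n)))) (at 0)"
        using corA[OF x0 y0 neq nv orth] unfolding en .
    qed
    show "((\<lambda>t. Etau \<tau> (x0 + t *\<^sub>R e n) (y0 - t *\<^sub>R e n)) has_real_derivative
              (Etau (cov_deriv (e n) \<tau>) x0 y0 - 2 * \<tau> y0 (e n) (e n))) (at 0)"
      using corB[OF x0 y0 neq] unfolding en .
  qed
qed


end
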